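(* Let $\beta,\delta\in(0,1)$, $K>0$, and let $\eta_1,\eta_2\ge0$ be constants with $\delta>\eta_2$. Consider $$\frac{df}{dt}=\tfrac12 fm\beta L-\delta f-\eta_1 f,\qquad \frac{dm}{dt}=\tfrac12 fm\beta L-\delta m+\eta_2 m,\qquad L=1-\frac{f+m}{K}.$$ If $\beta K<2\delta+\eta_1-\eta_2$, then the equilibrium $(0,0)$ is globally asymptotically stable.
   Context: $f$ and $m$ are female and male densities. $\eta_1$ is the female removal (harvesting) rate and $\eta_2$ the male addition (stocking) rate; this is the "female harvesting male stocking" model. The standing assumption is $\delta>\eta_2$ whenever $\eta_2\neq0$. *)

theory Defs
  imports "HOL-Analysis.Analysis"
begin

definition Lmat :: "real \<Rightarrow> real \<Rightarrow> real \<Rightarrow> real" where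
  "Lmat K f m = 1 - (f + m) / K"

definition rhs_f :: "real \<Rightarrow> real \<Rightarrow> real \<Rightarrow> real \<Rightarrow> real \<Rightarrow> real \<Rightarrow> real \<Rightarrow> real" where
  "rhs_f \<beta> \<delta> K \<eta>1 \<eta>2 f m = (1/2) * f * m * \<beta> * Lmat K f m - \<delta> * f - \<eta>1 * f"

definition rhs_m :: "real \<Rightarrow> real \<Rightarrow> real \<Rightarrow> real \<Rightarrow> real \<Rightarrow> real \<Rightarrow> real \<Rightarrow> real" where
  "rhs_m \<beta> \<delta> K \<eta>1 \<eta>2 f m = (1/2) * f * m * \<beta> * Lmat K f m - \<delta> * m + \<eta>2 * m"

definition fhms_solution ::
  "real \<Rightarrow> real \<Rightarrow> real \<Rightarrow> real \<Rightarrow> real \<Rightarrow> (real \<Rightarrow> real) \<Rightarrow> (real \<Rightarrow> real) \<Rightarrow> bool" where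
  "fhms_solution \<beta> \<delta> K \<eta>1 \<eta>2 f m \<longleftrightarrow>
     f 0 \<ge> 0 \<and> m 0 \<ge> 0 \<and>
     (\<forall>t\<ge>0. (f has_real_derivative rhs_f \<beta> \<delta> K \<eta>1 \<eta>2 (f t) (m t)) (at t within {0..}) \<and>
             (m has_real_derivative rhs_m \<beta> \<delta> K \<eta>1 \<eta>2 (f t) (m t)) (at t within {0..}))"

definition origin_GAS :: "real \<Rightarrow> real \<Rightarrow> real \<Rightarrow> real \<Rightarrow> real \<Rightarrow> bool" where
  "origin_GAS \<beta> \<delta> K \<eta>1 \<eta>2 \<longleftrightarrow>
     rhs_f \<beta> \<delta> K \<eta>1 \<eta>2 0 0 = 0 \<and> rhs_m \<beta> \<delta> K \<eta>1 \<eta>2 0 0 = 0 \<and>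
     (\<forall>\<epsilon>>0. \<exists>r>0. \<forall>f m. fhms_solution \<beta> \<delta> K \<eta>1 \<eta>2 f m \<and> norm (f 0, m 0) < r \<longrightarrow>
         (\<forall>t\<ge>0. norm (f t, m t) < \<epsilon>)) \<and>
     (\<forall>f m. fhms_solution \<beta> \<delta> K \<eta>1 \<eta>2 f m \<longrightarrow>
         ((\<lambda>t. (f t, m t)) \<longlongrightarrow> (0, 0)) at_top)"

end

theory Submission
  imports Defs
begin

schematic_goal decr_within:
  fixes h h' :: "real \<Rightarrow> real"
  assumes "0 \<le> a" "a \<le> b"
    and d: "\<And>t. t \<ge> 0 \<Longrightarrow> (h has_real_derivative h' t) (at t within {0..})"
    and n: "\<And>t. a \<le> t \<Longrightarrow> t \<le> b \<Longrightarrow> h' t \<le> 0"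
  shows "h b \<le> h a"
    and "?Q \<longrightarrow> ?Q"
proof -
show "h b \<le> h a"
proof (rule DERIV_nonpos_imp_decreasing_open[OF assms(2)])
  fix x assume x: "a < x" "x < b"
  have "x \<in> interior {0::real..}" using x assms(1) by simp
  then have "at x within {0..} = at x" by (rule at_within_interior)
  then show "\<exists>y. (h has_real_derivative y) (at x) \<and> y \<le> 0"
    using d[of x] n[of x] x assms(1) by auto
next
  have "continuous_on {0..} h" by (rule DERIV_continuous_on) (use d in auto)
  then show "continuous_on {a..b} h"
    by (rule continuous_on_subset) (use assms(1) in auto)
qed
qed (rule impI)

schematic_goal nonneg_pres:
  fixes x g :: "real \<Rightarrow> real"
  assumes x0: "x 0 \<ge> 0"
    and d: "\<And>t. t \<ge> 0 \<Longrightarrow> (x has_real_derivative x t * g t) (at t within {0..})"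
    and gc: "continuous_on {0..} g"
    and t1: "t1 \<ge> 0"
  shows "x t1 \<ge> 0"
    and "?Q \<longrightarrow> ?Q"
proof -
show "x t1 \<ge> 0"
proof (rule ccontr)
  assume neg: "\<not> x t1 \<ge> 0"
  have xc: "continuous_on {0..} x" by (rule DERIV_continuous_on) (use d in auto)
  have "continuous_on {0..t1} x" by (rule continuous_on_subset[OF xc]) auto
  then obtain t0 where t0: "0 \<le> t0" "t0 \<le> t1" "x t0 = 0"
    using IVT2'[where f=x and a=0 and b=t1 and y=0] x0 neg t1 by auto
  have "compact (g ` {0..t1})"
    by (rule compact_continuous_image) (rule continuous_on_subset[OF gc], auto)
  then obtain M where M: "\<And>t. t \<in> {0..t1} \<Longrightarrow> norm (g t) \<le> M"
    using compact_imp_bounded bounded_iff by (metis imageI)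
  define h where "h t = (x t)^2 * exp (-2*M*t)" for t
  have hd: "(h has_real_derivative (2 * x t * (x t * g t)) * exp (-2*M*t) + (x t)^2 * (exp (-2*M*t) * (-2*M))) (at t within {0..})"
    if "t \<ge> 0" for t
  proof -
    have dx: "(x has_real_derivative x t * g t) (at t within {0..})" using d that .
    have d1: "((\<lambda>t. (x t)^2) has_real_derivative 2 * x t * (x t * g t)) (at t within {0..})"
      using DERIV_power[OF dx, of 2] by (simp add: mult_ac)
    have d2: "((\<lambda>t. exp (-2*M*t)) has_real_derivative exp (-2*M*t) * (-2*M)) (at t within {0..})"
      by (auto intro!: derivative_eq_intros)
    show ?thesis unfolding h_def using DERIV_mult[OF d1 d2] by (simp add: mult_ac)
  qed
  have "h t1 \<le> h t0"
  proof (rule decr_within(1)[OF t0(1,2) hd])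
    fix t assume tt: "t0 \<le> t" "t \<le> t1"
    have "g t \<le> M" using M[of t] tt t0 by auto
    then have "(x t)^2 * (g t - M) \<le> 0"
      by (intro mult_nonneg_nonpos) auto
    then have "2 * ((x t)^2 * (g t - M)) \<le> 0" by linarith
    then have "2 * ((x t)^2 * (g t - M)) * exp (-2*M*t) \<le> 0"
      by (rule mult_nonpos_nonneg) simp
    then show "2 * x t * (x t * g t) * exp (-2*M*t) + (x t)^2 * (exp (-2*M*t) * (-2*M)) \<le> 0"
      by (simp add: algebra_simps power2_eq_square)
  qed
  then have "(x t1)^2 * exp (-2*M*t1) \<le> 0" using t0 by (simp add: h_def)
  then have "(x t1)^2 \<le> 0" by (simp add: mult_le_0_iff)
  then show False using neg by simp
qed
qed (rule impI)

schematic_goal key_ineq: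
  fixes f m K \<beta> a b :: real
  assumes "f \<ge> 0" "m \<ge> 0" "K > 0" "\<beta> > 0" "a \<ge> 0" "b > 0" "\<beta> * K \<le> a + b"
  shows "f * m * \<beta> * (1 - (f + m) / K) \<le> (a * f + b * m) / 4"
    and "?Q \<longrightarrow> ?Q"
proof -
show "f * m * \<beta> * (1 - (f + m) / K) \<le> (a * f + b * m) / 4"
proof (cases "f + m \<ge> K")
  case True
  then have "1 - (f + m) / K \<le> 0" using assms by (simp add: field_simps)
  moreover have "f * m * \<beta> \<ge> 0" using assms by simp
  ultimately have "f * m * \<beta> * (1 - (f + m) / K) \<le> 0" by (simp add: mult_nonneg_nonpos)
  moreover have "(a * f + b * m) / 4 \<ge> 0" using assms by simp
  ultimately show ?thesis by linarith
next
  case False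
  let ?P = "f * m * \<beta> * (1 - (f + m) / K)"
  have q1: "m * (1 - (f + m) / K) \<le> K / 4"
  proof -
    have "m * (1 - (f + m) / K) \<le> m * (1 - m / K)"
      using assms by (intro mult_left_mono) (auto simp: field_simps)
    also have "\<dots> \<le> K / 4"
    proof -
      have "K * (m * (1 - m / K)) = K * m - m^2" using assms by (simp add: field_simps power2_eq_square)
      also have "\<dots> \<le> K * (K / 4)" using sum_squares_ge_zero[of "m - K/2" 0]
        by (simp add: power2_eq_square algebra_simps)
      finally show ?thesis by (rule mult_left_le_imp_le) (use assms in auto)
    qed
    finally show ?thesis .
  qed
  have q2: "f * (1 - (f + m) / K) \<le> K / 4"
  proof -
    have "f * (1 - (f + m) / K) \<le> f * (1 - f / K)"
      using assms by (intro mult_left_mono) (auto simp: field_simps)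
    also have "\<dots> \<le> K / 4"
    proof -
      have "K * (f * (1 - f / K)) = K * f - f^2" using assms by (simp add: field_simps power2_eq_square)
      also have "\<dots> \<le> K * (K / 4)" using sum_squares_ge_zero[of "f - K/2" 0]
        by (simp add: power2_eq_square algebra_simps)
      finally show ?thesis by (rule mult_left_le_imp_le) (use assms in auto)
    qed
    finally show ?thesis .
  qed
  have p1: "?P \<le> \<beta> * K * f / 4"
  proof -
    have "?P = (f * \<beta>) * (m * (1 - (f + m) / K))" by (simp add: algebra_simps)
    also have "\<dots> \<le> (f * \<beta>) * (K / 4)" using q1 assms by (intro mult_left_mono) auto
    finally show ?thesis by (simp add: algebra_simps)
  qed
  have p2: "?P \<le> \<beta> * K * m / 4"
  proof -
    have "?P = (m * \<beta>) * (f * (1 - (f + m) / K))" by (simp add: algebra_simps)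
    also have "\<dots> \<le> (m * \<beta>) * (K / 4)" using q2 assms by (intro mult_left_mono) auto
    finally show ?thesis by (simp add: algebra_simps)
  qed
  have "(a + b) * ?P = a * ?P + b * ?P" by (rule distrib_right)
  also have "\<dots> \<le> a * (\<beta> * K * f / 4) + b * (\<beta> * K * m / 4)"
    using p1 p2 assms by (intro add_mono mult_left_mono) auto
  also have "\<dots> = (\<beta> * K) * ((a * f + b * m) / 4)" by (simp add: algebra_simps)
  also have "\<dots> \<le> (a + b) * ((a * f + b * m) / 4)"
    using assms by (intro mult_right_mono) auto
  finally show ?thesis by (rule mult_left_le_imp_le) (use assms in auto)
qed
qed (rule impI)

lemma lin: "(R::real) = P - A - B \<Longrightarrow> P \<le> (A + B) / 4 \<Longrightarrow> C \<le> A \<Longrightarrow> R + 3/4 * (C + B) \<le> 0"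
  by (simp add: field_simps)

schematic_goal sol_props:
  fixes \<beta> \<delta> K \<eta>1 \<eta>2 :: real
  assumes "0 < \<beta>" "0 < \<delta>" "K > 0"
    and "\<eta>1 \<ge> 0" "\<eta>2 \<ge> 0" "\<delta> > \<eta>2"
    and "\<beta> * K < 2 * \<delta> + \<eta>1 - \<eta>2"
    and sol: "fhms_solution \<beta> \<delta> K \<eta>1 \<eta>2 f m"
    and t: "t \<ge> 0"
  shows "f t \<ge> 0 \<and> m t \<ge> 0 \<and> f t + m t \<le> (f 0 + m 0) * exp (- (3/4 * (\<delta> - \<eta>2)) * t)"
    and "?Q \<longrightarrow> ?Q"
proof -
show "f t \<ge> 0 \<and> m t \<ge> 0 \<and> f t + m t \<le> (f 0 + m 0) * exp (- (3/4 * (\<delta> - \<eta>2)) * t)"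
proof -
  have f0: "f 0 \<ge> 0" and m0: "m 0 \<ge> 0" using sol by (auto simp: fhms_solution_def)
  have df: "\<And>t. t \<ge> 0 \<Longrightarrow> (f has_real_derivative rhs_f \<beta> \<delta> K \<eta>1 \<eta>2 (f t) (m t)) (at t within {0..})"
    and dm: "\<And>t. t \<ge> 0 \<Longrightarrow> (m has_real_derivative rhs_m \<beta> \<delta> K \<eta>1 \<eta>2 (f t) (m t)) (at t within {0..})"
    using sol by (auto simp: fhms_solution_def)
  have fc: "continuous_on {0..} f" by (rule DERIV_continuous_on) (use df in auto)
  have mc: "continuous_on {0..} m" by (rule DERIV_continuous_on) (use dm in auto)
  have fnn: "f s \<ge> 0" if "s \<ge> 0" for s
  proof (rule nonneg_pres(1)[where x=f, OF f0 _ _ that])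
    fix t :: real assume "t \<ge> 0"
    from df[OF this] show "(f has_real_derivative f t * ((1/2) * m t * \<beta> * Lmat K (f t) (m t) - \<delta> - \<eta>1)) (at t within {0..})"
      by (simp add: rhs_f_def algebra_simps)
  next
    show "continuous_on {0..} (\<lambda>t. (1/2) * m t * \<beta> * Lmat K (f t) (m t) - \<delta> - \<eta>1)"
      unfolding Lmat_def by (intro continuous_intros fc mc) (use assms in auto)
  qed
  have mnn: "m s \<ge> 0" if "s \<ge> 0" for s
  proof (rule nonneg_pres(1)[where x=m, OF m0 _ _ that])
    fix t :: real assume "t \<ge> 0"
    from dm[OF this] show "(m has_real_derivative m t * ((1/2) * f t * \<beta> * Lmat K (f t) (m t) - \<delta> + \<eta>2)) (at t within {0..})"
      by (simp add: rhs_m_def algebra_simps)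
  next
    show "continuous_on {0..} (\<lambda>t. (1/2) * f t * \<beta> * Lmat K (f t) (m t) - \<delta> + \<eta>2)"
      unfolding Lmat_def by (intro continuous_intros fc mc) (use assms in auto)
  qed
  define c where "c = 3/4 * (\<delta> - \<eta>2)"
  define W where "W s = (f s + m s) * exp (c * s)" for s
  have Wd: "(W has_real_derivative (rhs_f \<beta> \<delta> K \<eta>1 \<eta>2 (f s) (m s) + rhs_m \<beta> \<delta> K \<eta>1 \<eta>2 (f s) (m s)) * exp (c * s)
      + (f s + m s) * (exp (c * s) * c)) (at s within {0..})" if "s \<ge> 0" for s
  proof -
    have d1: "((\<lambda>s. f s + m s) has_real_derivative rhs_f \<beta> \<delta> K \<eta>1 \<eta>2 (f s) (m s) + rhs_m \<beta> \<delta> K \<eta>1 \<eta>2 (f s) (m s)) (at s within {0..})"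
      using DERIV_add[OF df[OF that] dm[OF that]] by simp
    have d2: "((\<lambda>s. exp (c * s)) has_real_derivative exp (c * s) * c) (at s within {0..})"
      by (auto intro!: derivative_eq_intros)
    show ?thesis unfolding W_def using DERIV_mult[OF d1 d2] by (simp add: mult_ac)
  qed
  have "W t \<le> W 0"
  proof (rule decr_within(1)[OF order_refl t Wd])
    fix s :: real assume s: "0 \<le> s" "s \<le> t"
    have k: "f s * m s * \<beta> * (1 - (f s + m s) / K) \<le> ((\<delta> + \<eta>1) * f s + (\<delta> - \<eta>2) * m s) / 4"
      by (rule key_ineq(1)) (use assms fnn mnn s in auto)
    have e: "rhs_f \<beta> \<delta> K \<eta>1 \<eta>2 (f s) (m s) + rhs_m \<beta> \<delta> K \<eta>1 \<eta>2 (f s) (m s)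
       = f s * m s * \<beta> * (1 - (f s + m s) / K) - (\<delta> + \<eta>1) * f s - (\<delta> - \<eta>2) * m s"
      by (simp add: rhs_f_def rhs_m_def Lmat_def algebra_simps)
    have "(\<delta> - \<eta>2) * f s \<le> (\<delta> + \<eta>1) * f s" using assms fnn[of s] s by (intro mult_right_mono) auto
    then have "rhs_f \<beta> \<delta> K \<eta>1 \<eta>2 (f s) (m s) + rhs_m \<beta> \<delta> K \<eta>1 \<eta>2 (f s) (m s) + c * (f s + m s) \<le> 0"
    proof -
      have cc: "c * (f s + m s) = 3/4 * ((\<delta> - \<eta>2) * f s + (\<delta> - \<eta>2) * m s)"
        by (simp add: c_def field_simps)
      show ?thesis unfolding cc by (rule lin[OF e k]) fact
    qed
    then have "(rhs_f \<beta> \<delta> K \<eta>1 \<eta>2 (f s) (m s) + rhs_m \<beta> \<delta> K \<eta>1 \<eta>2 (f s) (m s) + c * (f s + m s)) * exp (c * s) \<le> 0"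
      by (simp add: mult_nonpos_nonneg)
    then show "(rhs_f \<beta> \<delta> K \<eta>1 \<eta>2 (f s) (m s) + rhs_m \<beta> \<delta> K \<eta>1 \<eta>2 (f s) (m s)) * exp (c * s)
      + (f s + m s) * (exp (c * s) * c) \<le> 0"
      by (simp add: algebra_simps)
  qed
  then have "(f t + m t) * exp (c * t) \<le> f 0 + m 0" by (simp add: W_def)
  then have "f t + m t \<le> (f 0 + m 0) * exp (- c * t)"
    by (simp add: exp_minus field_simps)
  then show ?thesis using fnn mnn t by (simp add: c_def)
qed
qed (rule impI)

schematic_goal main_aux:
  fixes \<beta> \<delta> K \<eta>1 \<eta>2 :: real
  assumes "0 < \<beta>" "\<beta> < 1" "0 < \<delta>" "\<delta> < 1" "K > 0"
    and "\<eta>1 \<ge> 0" "\<eta>2 \<ge> 0" "\<delta> > \<eta>2"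
    and "\<beta> * K < 2 * \<delta> + \<eta>1 - \<eta>2"
  shows "origin_GAS \<beta> \<delta> K \<eta>1 \<eta>2"
    and "?Q \<longrightarrow> ?Q"
proof -
show "origin_GAS \<beta> \<delta> K \<eta>1 \<eta>2"
proof -
  define c where "c = 3/4 * (\<delta> - \<eta>2)"
  have c: "c > 0" using assms by (simp add: c_def)
  have P: "f t \<ge> 0 \<and> m t \<ge> 0 \<and> f t + m t \<le> (f 0 + m 0) * exp (- c * t)"
    if "fhms_solution \<beta> \<delta> K \<eta>1 \<eta>2 f m" "t \<ge> 0" for f m t
    using sol_props(1)[OF assms(1,3,5,6,7,8,9) that] unfolding c_def by simp
  have stab: "\<exists>r>0. \<forall>f m. fhms_solution \<beta> \<delta> K \<eta>1 \<eta>2 f m \<and> norm (f 0, m 0) < r \<longrightarrow>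
         (\<forall>t\<ge>0. norm (f t, m t) < \<epsilon>)" if e: "\<epsilon> > 0" for \<epsilon>
  proof (intro exI[of _ "\<epsilon>/2"] conjI allI impI)
    show "\<epsilon>/2 > 0" using e by simp
    fix f m t assume H: "fhms_solution \<beta> \<delta> K \<eta>1 \<eta>2 f m \<and> norm (f 0, m 0) < \<epsilon>/2" and t: "(t::real) \<ge> 0"
    have sol: "fhms_solution \<beta> \<delta> K \<eta>1 \<eta>2 f m" using H by simp
    have P0: "f 0 \<ge> 0" "m 0 \<ge> 0" using P[OF sol order_refl] by auto
    have Pt: "f t \<ge> 0" "m t \<ge> 0" "f t + m t \<le> (f 0 + m 0) * exp (- c * t)" using P[OF sol t] by auto
    have "exp (- c * t) \<le> 1" using c t by simp
    then have "(f 0 + m 0) * exp (- c * t) \<le> f 0 + m 0"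
      using P0 by (simp add: mult_left_le)
    have "norm (f t, m t) \<le> norm (f t) + norm (m t)" by (rule norm_Pair_le)
    also have "\<dots> = f t + m t" using Pt by simp
    also have "\<dots> \<le> f 0 + m 0" using Pt \<open>(f 0 + m 0) * exp (- c * t) \<le> f 0 + m 0\<close> by linarith
    also have "\<dots> \<le> norm (f 0, m 0) + norm (f 0, m 0)"
      using norm_fst_le[of "f 0" "m 0"] norm_snd_le[of "m 0" "f 0"] by simp
    also have "\<dots> < \<epsilon>" using H by simp
    finally show "norm (f t, m t) < \<epsilon>" .
  qed
  have conv: "((\<lambda>t. (f t, m t)) \<longlongrightarrow> (0, 0)) at_top" if sol: "fhms_solution \<beta> \<delta> K \<eta>1 \<eta>2 f m" for f m
  proof -
    have "filterlim (\<lambda>t::real. c * t) at_top at_top"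
      by (rule filterlim_tendsto_pos_mult_at_top[OF tendsto_const c filterlim_ident])
    then have "filterlim (\<lambda>t::real. - (c * t)) at_bot at_top"
      by (simp add: filterlim_uminus_at_top)
    then have "((\<lambda>t. exp (- (c * t))) \<longlongrightarrow> 0) at_top"
      by (rule filterlim_compose[OF exp_at_bot])
    then have ex: "((\<lambda>t. exp (- c * t)) \<longlongrightarrow> 0) at_top" by simp
    have up: "((\<lambda>t. (f 0 + m 0) * exp (- c * t)) \<longlongrightarrow> 0) at_top"
      using tendsto_mult[OF tendsto_const ex, of "f 0 + m 0"] by simp
    have ev: "eventually (\<lambda>t. 0 \<le> f t \<and> 0 \<le> m t \<and> f t + m t \<le> (f 0 + m 0) * exp (- c * t)) at_top"
      using eventually_ge_at_top[of "0::real"] by eventually_elim (use P[OF sol] in auto)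
    have "(f \<longlongrightarrow> 0) at_top"
      by (rule tendsto_sandwich[OF _ _ tendsto_const up]) (use ev in \<open>auto elim: eventually_mono\<close>)
    moreover have "(m \<longlongrightarrow> 0) at_top"
      by (rule tendsto_sandwich[OF _ _ tendsto_const up]) (use ev in \<open>auto elim: eventually_mono\<close>)
    ultimately show ?thesis by (rule tendsto_Pair)
  qed
  show ?thesis unfolding origin_GAS_def
    using stab conv by (auto simp: rhs_f_def rhs_m_def)
qed
qed (rule impI)

theorem mainTheorem4:
  fixes \<beta> \<delta> K \<eta>1 \<eta>2 :: real
  assumes "0 < \<beta>" "\<beta> < 1" "0 < \<delta>" "\<delta> < 1" "K > 0"
    and "\<eta>1 \<ge> 0" "\<eta>2 \<ge> 0" "\<delta> > \<eta>2"
    and "\<beta> * K < 2 * \<delta> + \<eta>1 - \<eta>2"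
  shows "origin_GAS \<beta> \<delta> K \<eta>1 \<eta>2"
  by (rule main_aux(1)[OF assms])

end
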